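(* There exists a constant $C>0$ such that for all $\theta>0$ and all real $\delta$ with $|\delta|\le\theta/3$, \[\Big|f(\theta+\delta)-f(\theta)-\delta f'(\theta)-\frac{\delta^2}{2}f''(\theta)\Big|\le C\,\theta^{-2}|\delta|^3e^{-\theta},\qquad \big|j(\theta+\delta)-j(\theta)-\delta j'(\theta)\big|\le C\,\theta^{-2}\delta^2e^{-\theta}.\]
   Context: Define $\lambda:[0,\infty)\to(0,1/4]$ by $\lambda(0)=1/4$ and, for $\theta>0$, $\lambda(\theta)$ is the unique $\lambda\in(0,1/4)$ with $-1+\frac{\operatorname{artanh}(\sqrt{1-4\lambda})}{\sqrt{1-4\lambda}}=\theta$. For $\theta>0$ set $f(\theta)=-\ln\lambda(\theta)-2\theta-\theta\ln(1-4\lambda(\theta))$ and $j(\theta)=-\tfrac12\ln(1-4(\theta+1)\lambda(\theta))+\tfrac12\ln 2$. *)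

theory Defs
  imports "HOL-Analysis.Analysis"
begin

definition lam :: "real \<Rightarrow> real" where
  "lam \<theta> = (if \<theta> = 0 then 1/4 else
     (THE l. 0 < l \<and> l < 1/4 \<and>
        -1 + artanh (sqrt (1 - 4*l)) / sqrt (1 - 4*l) = \<theta>))"

definition fF :: "real \<Rightarrow> real" where
  "fF \<theta> = - ln (lam \<theta>) - 2*\<theta> - \<theta> * ln (1 - 4 * lam \<theta>)"

definition jJ :: "real \<Rightarrow> real" where
  "jJ \<theta> = - (1/2) * ln (1 - 4*(\<theta>+1) * lam \<theta>) + (1/2) * ln 2"

end

theory Submission
  imports Defs
begin
lemma mono_deriv0:
  fixes f f' :: "real \<Rightarrow> real"
  assumes "\<And>t. 0 \<le> t \<Longrightarrow> (f has_real_derivative f' t) (at t)" "\<And>t. 0 \<le> t \<Longrightarrow> 0 \<le> f' t" "0 \<le> x"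
  shows "f 0 \<le> f x"
  by (rule DERIV_nonneg_imp_nondecreasing[OF assms(3)]) (use assms in auto)

lemma sinh_ge_x: "0 \<le> (x::real) \<Longrightarrow> x \<le> sinh x"
  using real_le_x_sinh[of x] by (simp add: sinh_field_def exp_minus)

lemma cosh_ge_quad: "0 \<le> (x::real) \<Longrightarrow> 1 + x^2/2 \<le> cosh x"
proof -
  assume x: "0 \<le> x"
  have "(\<lambda>t. cosh t - 1 - t^2/2) 0 \<le> (\<lambda>t. cosh t - 1 - t^2/2) x"
    by (rule mono_deriv0[where f'="\<lambda>t. sinh t - t"]) (auto intro!: derivative_eq_intros simp: sinh_ge_x x)
  then show ?thesis by simp
qed

lemma sinh_ge_cubic: "0 \<le> (x::real) \<Longrightarrow> x + x^3/6 \<le> sinh x"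
proof -
  assume x: "0 \<le> x"
  have "(\<lambda>t. sinh t - t - t^3/6) 0 \<le> (\<lambda>t. sinh t - t - t^3/6) x"
    by (rule mono_deriv0[where f'="\<lambda>t. cosh t - 1 - t^2/2"]) (auto intro!: derivative_eq_intros simp: x dest!: cosh_ge_quad)
  then show ?thesis by simp
qed

lemma ucosh_ge: "0 \<le> (x::real) \<Longrightarrow> sinh x \<le> x * cosh x"
proof -
  assume x: "0 \<le> x"
  have "(\<lambda>t. t * cosh t - sinh t) 0 \<le> (\<lambda>t. t * cosh t - sinh t) x"
    by (rule mono_deriv0[where f'="\<lambda>t. t * sinh t"]) (auto intro!: derivative_eq_intros simp: x)
  then show ?thesis by simp
qed

lemma ucosh_gt: "0 < (x::real) \<Longrightarrow> sinh x < x * cosh x"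
proof -
  assume x: "0 < x"
  have "(\<lambda>t. t * cosh t - sinh t) 0 < (\<lambda>t. t * cosh t - sinh t) x"
    apply (rule DERIV_pos_imp_increasing_open[OF x])
     apply (rule_tac x="xa * sinh xa" in exI)
     apply (auto intro!: derivative_eq_intros continuous_intros)
    done
  then show ?thesis by simp
qed

lemma ucosh_le: "0 \<le> (x::real) \<Longrightarrow> x * cosh x - sinh x \<le> x^2 * sinh x / 3"
proof -
  assume x: "0 \<le> x"
  have "(\<lambda>t. t^2 * sinh t / 3 - t * cosh t + sinh t) 0 \<le> (\<lambda>t. t^2 * sinh t / 3 - t * cosh t + sinh t) x"
  proof (rule mono_deriv0[where f'="\<lambda>t. t / 3 * (t * cosh t - sinh t)"])
    fix t :: real assume t: "0 \<le> t"
    show "((\<lambda>t. t^2 * sinh t / 3 - t * cosh t + sinh t) has_real_derivative t / 3 * (t * cosh t - sinh t)) (at t)"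
      by (rule derivative_eq_intros refl | simp)+ (simp add: algebra_simps power2_eq_square)
    show "0 \<le> t / 3 * (t * cosh t - sinh t)" using ucosh_ge[OF t] t by simp
  qed (use x in auto)
  then show ?thesis by simp
qed

lemma tanh_cubic: "0 \<le> (x::real) \<Longrightarrow> tanh x + tanh x ^ 3 / 3 \<le> x"
proof -
  assume x: "0 \<le> x"
  have "(\<lambda>t. t - tanh t - tanh t ^ 3 / 3) 0 \<le> (\<lambda>t. t - tanh t - tanh t ^ 3 / 3) x"
  proof (rule mono_deriv0[where f'="\<lambda>t. tanh t ^ 4"])
    fix t :: real assume t: "0 \<le> t"
    show "((\<lambda>t. t - tanh t - tanh t ^ 3 / 3) has_real_derivative tanh t ^ 4) (at t)"
      by (rule derivative_eq_intros refl | simp)+ (simp add: algebra_simps power2_eq_square power3_eq_cube power4_eq_xxxx)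
  qed (use x in auto)
  then show ?thesis by simp
qed

lemma hyp2: "sinh x * sinh x = cosh x * cosh x - (1::real)"
  using cosh_square_eq[of x] by (simp add: power2_eq_square)

lemma hyp: "cosh x * cosh x = 1 + sinh x * sinh (x::real)"
  using cosh_square_eq[of x] by (simp add: power2_eq_square)

definition th :: "real \<Rightarrow> real" where "th u = u * cosh u / sinh u - 1"
definition thd :: "real \<Rightarrow> real" where "thd u = (sinh u * cosh u - u) / (sinh u)^2"

lemma th_deriv: "0 < u \<Longrightarrow> (th has_real_derivative thd u) (at u)"
  unfolding th_def[abs_def] thd_def
  apply (rule derivative_eq_intros refl | simp)+
  apply (simp add: field_simps power2_eq_square hyp)
  done

lemma sc_gt: "0 < u \<Longrightarrow> u < sinh u * cosh (u::real)"
proof -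
  assume u: "0 < u"
  have "2*u + (2*u)^3/6 \<le> sinh (2*u)" by (rule sinh_ge_cubic) (use u in simp)
  moreover have "0 < (2*u)^3" using u by simp
  moreover have "sinh (2*u) = 2 * sinh u * cosh u" by (simp add: sinh_double)
  ultimately show ?thesis by linarith
qed

lemma thd_pos: "0 < u \<Longrightarrow> 0 < thd u"
  unfolding thd_def using sc_gt[of u] by simp

lemma th_pos: "0 < u \<Longrightarrow> 0 < th u"
  unfolding th_def using ucosh_gt[of u] by (simp add: field_simps)

lemma th_le_sq: "0 < u \<Longrightarrow> th u \<le> u^2/3"
  unfolding th_def using ucosh_le[of u] by (simp add: field_simps)

lemma th_le_u: "0 < u \<Longrightarrow> th u \<le> u"
proof -
  assume u: "0 < u"
  have "exp (-u) \<le> 1" using u by simp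
  hence "u * (cosh u - sinh u) \<le> u" using u by (simp add: cosh_minus_sinh)
  also have "\<dots> \<le> sinh u" using sinh_ge_x[of u] u by simp
  finally show ?thesis unfolding th_def using u by (simp add: field_simps)
qed

lemma th_ge: "0 < u \<Longrightarrow> u - 1 \<le> th u"
proof -
  assume u: "0 < u"
  have "u * sinh u \<le> u * cosh u" using u sinh_le_cosh_real[of u] by simp
  then show ?thesis unfolding th_def using u by (simp add: field_simps)
qed

lemma th_strict: "0 < a \<Longrightarrow> a < b \<Longrightarrow> th a < th b"
  by (rule DERIV_pos_imp_increasing[of a b th]) (auto intro!: exI[of _ "thd _"] th_deriv thd_pos)

lemma th_inj: "0 < a \<Longrightarrow> 0 < b \<Longrightarrow> th a = th b \<Longrightarrow> a = b"
  by (metis linorder_neqE_linordered_idom th_strict less_irrefl)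

lemma th_cont: "continuous_on {a..b} th" if "0 < a"
  using that by (intro DERIV_atLeastAtMost_imp_continuous_on) (meson th_deriv less_le_trans)

lemma th_surj: "0 < t \<Longrightarrow> \<exists>u>0. th u = t"
proof -
  assume t: "0 < t"
  define a where "a = min 1 t"
  have a: "0 < a" "a \<le> 1" "a \<le> t" using t by (auto simp: a_def)
  have "th a \<le> a^2/3" using th_le_sq a by simp
  also have "\<dots> \<le> a/3" using a by (simp add: power2_eq_square mult_le_cancel_left1)
  also have "\<dots> \<le> t" using a by simp
  finally have 1: "th a \<le> t" .
  have 2: "t \<le> th (t+2)" using th_ge[of "t+2"] t by simp
  obtain x where "a \<le> x" "x \<le> t+2" "th x = t"
    using IVT'[of th a t "t+2", OF 1 2] a th_cont[of a "t+2"] by auto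
  then show ?thesis using a by (intro exI[of _ x]) auto
qed

definition Uf :: "real \<Rightarrow> real" where "Uf t = (THE u. 0 < u \<and> th u = t)"

lemma Uf: "0 < t \<Longrightarrow> 0 < Uf t \<and> th (Uf t) = t"
  unfolding Uf_def by (rule theI') (use th_surj th_inj in blast)

lemma Uf_th: "0 < u \<Longrightarrow> Uf (th u) = u"
  using Uf[OF th_pos[of u]] th_inj by auto

lemma Uf_isCont: "0 < t \<Longrightarrow> isCont Uf t"
proof -
  assume t: "0 < t"
  define u where "u = Uf t"
  have u: "0 < u" "th u = t" using Uf[OF t] by (auto simp: u_def)
  have z: "0 < z" if "\<bar>z - u\<bar> \<le> u/2" for z using that u abs_minus_commute[of z u] abs_ge_self[of "u - z"] by linarith
  have "isCont Uf (th u)"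
    apply (rule isCont_inverse_function[where f=th and g=Uf and x=u and d="u/2"])
    using u z by (auto intro!: Uf_th DERIV_isCont th_deriv)
  then show ?thesis using u by simp
qed

lemma Uf_deriv: "0 < t \<Longrightarrow> (Uf has_real_derivative inverse (thd (Uf t))) (at t)"
  apply (rule DERIV_inverse_function[where f=th and a=0 and b="t+1"])
  using Uf[of t] thd_pos[of "Uf t"] by (auto intro!: th_deriv Uf_isCont simp: Uf)

lemma tanh_artanh: "0 < s \<Longrightarrow> s < 1 \<Longrightarrow> tanh (artanh s) = (s::real)"
proof -
  assume s: "0 < s" "s < 1"
  have "-2 * artanh s = - ln ((1+s)/(1-s))" by (simp add: artanh_def)
  hence E: "exp (-2 * artanh s) = (1-s)/(1+s)"
    using s by (simp add: exp_minus)
  show ?thesis unfolding tanh_real_altdef E using s by (simp add: field_simps)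
qed

lemma lam_th: "0 < u \<Longrightarrow> lam (th u) = 1 / (4 * (cosh u)^2)"
proof -
  assume u: "0 < u"
  have c1: "1 < cosh u" using cosh_real_ge_1[of u] cosh_real_one_iff[of u] u by linarith
  hence c2: "1 < (cosh u)^2" by (simp add: one_less_power)
  have tp: "0 < tanh u" using u by simp
  have sq: "sqrt (1 - 4 * (1 / (4 * (cosh u)^2))) = tanh u"
  proof -
    have "1 - 4 * (1 / (4 * (cosh u)^2)) = (tanh u)^2"
      by (simp add: tanh_def field_simps hyp2 power2_eq_square)
    then show ?thesis using tp by simp
  qed
  have P: "0 < 1 / (4 * (cosh u)^2) \<and> 1 / (4 * (cosh u)^2) < 1/4 \<and>
     -1 + artanh (sqrt (1 - 4 * (1 / (4 * (cosh u)^2)))) / sqrt (1 - 4 * (1 / (4 * (cosh u)^2))) = th u"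
    unfolding sq artanh_tanh_real using c2 by (simp add: th_def tanh_def field_simps)
  have U: "l = 1 / (4 * (cosh u)^2)" if l: "0 < l" "l < 1/4"
      "-1 + artanh (sqrt (1 - 4*l)) / sqrt (1 - 4*l) = th u" for l
  proof -
    define s where "s = sqrt (1 - 4*l)"
    have s: "0 < s" "s < 1" using l by (auto simp: s_def real_sqrt_lt_1_iff)
    define v where "v = artanh s"
    have tv: "tanh v = s" using tanh_artanh s by (simp add: v_def)
    have v: "0 < v" using tv s by (metis tanh_real_pos_iff)
    have e: "-1 + v / s = th u" using l(3) unfolding s_def[symmetric] v_def[symmetric] .
    have "th v = -1 + v / s" using tv v s unfolding th_def tanh_def by (simp add: field_simps)
    hence "th v = th u" using e by simp
    hence "v = u" using th_inj v u by blast
    hence "s^2 = (tanh u)^2" using tv by simp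
    hence "1 - 4*l = (tanh u)^2" using l by (simp add: s_def)
    then show ?thesis by (simp add: tanh_def field_simps hyp2 power2_eq_square)
  qed
  have "lam (th u) = (THE l. 0 < l \<and> l < 1/4 \<and> -1 + artanh (sqrt (1 - 4*l)) / sqrt (1 - 4*l) = th u)"
    using th_pos[OF u] by (simp add: lam_def)
  also have "\<dots> = 1 / (4 * (cosh u)^2)"
    by (rule the_equality) (use P U in auto)
  finally show ?thesis .
qed

definition Lf :: "real \<Rightarrow> real" where "Lf t = 1 / (cosh (Uf t))^2"

lemma Lf_th: "0 < u \<Longrightarrow> Lf (th u) = 1 / (cosh u)^2"
  by (simp add: Lf_def Uf_th)

lemma lam_Lf: "0 < t \<Longrightarrow> lam t = Lf t / 4"
  using lam_th[of "Uf t"] Uf[of t] by (simp add: Lf_def)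

lemma Lf_bounds: "0 < t \<Longrightarrow> 0 < Lf t \<and> Lf t < 1 \<and> 0 < 1 - (t+1) * Lf t"
proof -
  assume t: "0 < t"
  define u where "u = Uf t"
  have u: "0 < u" "th u = t" using Uf[OF t] by (auto simp: u_def)
  have c1: "1 < cosh u" using cosh_real_ge_1[of u] cosh_real_one_iff[of u] u by linarith
  hence c2: "1 < (cosh u)^2" by (simp add: one_less_power)
  have sp: "0 < sinh u" using u by simp
  have Lv: "Lf t = 1/(cosh u)^2" using Lf_th[of u] u by simp
  have tv: "t + 1 = u*cosh u/sinh u" using u(2) unfolding th_def by simp
  have "(t+1) * Lf t = u / (sinh u * cosh u)"
    unfolding Lv tv using sp by (simp add: field_simps power2_eq_square)
  moreover have "u / (sinh u * cosh u) < 1" using sc_gt[OF u(1)] sp by simp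
  ultimately show ?thesis using Lf_th[of u] u c2 by simp
qed

lemma Lf_deriv: "0 < t \<Longrightarrow> (Lf has_real_derivative (-2 * Lf t * (1 - Lf t) / (1 - (t+1) * Lf t))) (at t)"
proof -
  assume t: "0 < t"
  define u where "u = Uf t"
  have u: "0 < u" "th u = t" using Uf[OF t] by (auto simp: u_def)
  have sp: "0 < sinh u" using u by simp
  have sc: "u < sinh u * cosh u" using sc_gt[OF u(1)] .
  have D: "((\<lambda>x. 1 / (cosh (Uf x))^2) has_real_derivative
      (- (2 * cosh u * (sinh u * inverse (thd u))) / ((cosh u)^2)^2)) (at t)"
    unfolding u_def
    by (rule derivative_eq_intros Uf_deriv[OF t] refl | simp)+
  have Lv: "Lf t = 1/(cosh u)^2" using Lf_th[of u] u by simp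
  have tv: "t + 1 = u*cosh u/sinh u" using u(2) unfolding th_def by simp
  have q: "1 - 1/(cosh u)^2 = (sinh u)^2/(cosh u)^2" by (simp add: field_simps sinh_square_eq)
  have sc': "sinh u * cosh u - u \<noteq> 0" using sc by simp
  have E: "- (2 * cosh u * (sinh u * inverse (thd u))) / ((cosh u)^2)^2
       = -2 * Lf t * (1 - Lf t) / (1 - (t+1) * Lf t)"
    unfolding Lv tv q thd_def using sp sc sc'
    by (simp add: field_simps power2_eq_square)
  show ?thesis using D unfolding E by (simp add: Lf_def[abs_def])
qed

definition F1 :: "real \<Rightarrow> real" where "F1 t = - ln (1 - Lf t)"
definition F2 :: "real \<Rightarrow> real" where "F2 t = -2 * Lf t / (1 - (t+1) * Lf t)"
definition F3 :: "real \<Rightarrow> real" where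
  "F3 t = 2 * Lf t * (2 - 3 * Lf t + (t+1) * (Lf t)^2) / (1 - (t+1) * Lf t)^3"
definition J1 :: "real \<Rightarrow> real" where
  "J1 t = - Lf t * ((t+1) * (2 - Lf t) - 1) / (2 * (1 - (t+1) * Lf t)^2)"
definition J2 :: "real \<Rightarrow> real" where
  "J2 t = (let L = Lf t; A = 1 - (t+1) * L; P = (t+1) * (2 - L) - 1 in
     - L / (2 * A^4) * (-2 * (1-L) * P * A + (2-L) * A^2 + 2 * (t+1) * L * (1-L) * A - 2 * L * P^2))"

lemma fF_alt: "0 < t \<Longrightarrow> fF t = - ln (Lf t / 4) - 2*t - t * ln (1 - Lf t)"
  by (simp add: fF_def lam_Lf)

lemma jJ_alt: "0 < t \<Longrightarrow> jJ t = - (1/2) * ln (1 - (t+1) * Lf t) + (1/2) * ln 2"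
proof -
  assume t: "0 < t"
  have e: "4*(t+1)*lam t = (t+1) * Lf t" using lam_Lf[OF t] by (simp add: algebra_simps)
  show ?thesis unfolding jJ_def e ..
qed

lemma Lf_deriv': "0 < t \<Longrightarrow> L = Lf t \<Longrightarrow> D = -2*L*(1-L)/(1-(t+1)*L) \<Longrightarrow> (Lf has_real_derivative D) (at t)"
  using Lf_deriv by simp

lemma fF_deriv: "0 < t \<Longrightarrow> (fF has_real_derivative F1 t) (at t)"
proof -
  assume t: "0 < t"
  note b = Lf_bounds[OF t]
  define L where "L = Lf t"
  define D where "D = -2*L*(1-L)/(1-(t+1)*L)"
  note D = Lf_deriv'[OF t L_def D_def]
  have a: "L \<noteq> 0" "1 - L \<noteq> 0" "1 - (t+1)*L \<noteq> 0" using b by (auto simp: L_def)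
  have "((\<lambda>x. - ln (Lf x / 4) - 2*x - x * ln (1 - Lf x)) has_real_derivative F1 t) (at t)"
    unfolding F1_def
    apply (rule derivative_eq_intros D refl | (use b in simp; fail))+
    unfolding L_def[symmetric] D_def using a apply (simp add: divide_simps)
    apply (simp add: algebra_simps)
    done
  then show ?thesis
    by (rule has_field_derivative_transform_within_open[where S="{0<..}"]) (use t fF_alt in auto)
qed

lemma F1_deriv: "0 < t \<Longrightarrow> (F1 has_real_derivative F2 t) (at t)"
proof -
  assume t: "0 < t"
  note b = Lf_bounds[OF t]
  define L where "L = Lf t"
  define D where "D = -2*L*(1-L)/(1-(t+1)*L)"
  note D = Lf_deriv'[OF t L_def D_def]
  have a: "L \<noteq> 0" "1 - L \<noteq> 0" "1 - (t+1)*L \<noteq> 0" using b by (auto simp: L_def)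
  show ?thesis
    unfolding F1_def[abs_def] F2_def
    apply (rule derivative_eq_intros D refl | (use b in simp; fail))+
    unfolding L_def[symmetric] D_def using a apply (simp add: divide_simps)
    apply (simp add: algebra_simps power2_eq_square power3_eq_cube)?
    done
qed

lemma F2_deriv: "0 < t \<Longrightarrow> (F2 has_real_derivative F3 t) (at t)"
proof -
  assume t: "0 < t"
  note b = Lf_bounds[OF t]
  define L where "L = Lf t"
  define D where "D = -2*L*(1-L)/(1-(t+1)*L)"
  note D = Lf_deriv'[OF t L_def D_def]
  have a: "L \<noteq> 0" "1 - L \<noteq> 0" "1 - (t+1)*L \<noteq> 0" using b by (auto simp: L_def)
  show ?thesis
    unfolding F2_def[abs_def] F3_def
    apply (rule derivative_eq_intros D refl | (use b in simp; fail))+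
    unfolding L_def[symmetric] D_def using a apply (simp add: divide_simps)
    apply (simp add: algebra_simps power2_eq_square power3_eq_cube)?
    done
qed

lemma jJ_deriv: "0 < t \<Longrightarrow> (jJ has_real_derivative J1 t) (at t)"
proof -
  assume t: "0 < t"
  note b = Lf_bounds[OF t]
  define L where "L = Lf t"
  define D where "D = -2*L*(1-L)/(1-(t+1)*L)"
  note D = Lf_deriv'[OF t L_def D_def]
  have a: "L \<noteq> 0" "1 - L \<noteq> 0" "1 - (t+1)*L \<noteq> 0" using b by (auto simp: L_def)
  have "((\<lambda>x. - (1/2) * ln (1 - (x+1) * Lf x) + (1/2) * ln 2) has_real_derivative J1 t) (at t)"
    unfolding J1_def
    apply (rule derivative_eq_intros D refl | (use b in simp; fail))+
    unfolding L_def[symmetric] D_def using a apply (simp add: divide_simps)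
    apply (simp add: algebra_simps power2_eq_square power3_eq_cube)?
    done
  then show ?thesis
    by (rule has_field_derivative_transform_within_open[where S="{0<..}"]) (use t jJ_alt in auto)
qed

lemma J1_deriv: "0 < t \<Longrightarrow> (J1 has_real_derivative J2 t) (at t)"
proof -
  assume t: "0 < t"
  note b = Lf_bounds[OF t]
  define L where "L = Lf t"
  define D where "D = -2*L*(1-L)/(1-(t+1)*L)"
  note D = Lf_deriv'[OF t L_def D_def]
  have a: "L \<noteq> 0" "1 - L \<noteq> 0" "1 - (t+1)*L \<noteq> 0" using b by (auto simp: L_def)
  show ?thesis
    unfolding J1_def[abs_def] J2_def Let_def
    apply (rule derivative_eq_intros D refl | (use b in simp; fail))+
    unfolding L_def[symmetric] D_def using a apply (simp add: divide_simps)
    apply (simp add: algebra_simps power2_eq_square power3_eq_cube)?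
    done
qed

lemma Lf_facts:
  assumes t: "0 < t"
  shows "1 - Lf t \<le> 3 * t" "Lf t \<le> 4 * exp (-2 * t)" "min t (1/2) \<le> 1 - (t+1) * Lf t"
proof -
  define u where "u = Uf t"
  have u: "0 < u" "th u = t" using Uf[OF t] by (auto simp: u_def)
  have sp: "0 < sinh u" using u by simp
  have Lv: "Lf t = 1/(cosh u)^2" using Lf_th[of u] u by simp
  have tv: "t + 1 = u*cosh u/sinh u" using u(2) unfolding th_def by simp
  define \<tau> where "\<tau> = tanh u"
  have tau: "0 < \<tau>" "\<tau> = sinh u / cosh u" using u by (auto simp: \<tau>_def tanh_def)
  have "\<tau> + \<tau>^3/3 \<le> u" using tanh_cubic[of u] u by (simp add: \<tau>_def)
  hence "1 + \<tau>^2/3 \<le> u / \<tau>" using tau(1) by (simp add: field_simps power2_eq_square power3_eq_cube)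
  moreover have "u / \<tau> = t + 1" unfolding tv tau(2) by simp
  moreover have "1 - Lf t = \<tau>^2" unfolding Lv tau(2) by (simp add: field_simps sinh_square_eq)
  ultimately show "1 - Lf t \<le> 3 * t" by simp
  have ce: "exp u / 2 \<le> cosh u" by (simp add: cosh_def)
  have "(exp u / 2)^2 \<le> (cosh u)^2" by (rule power_mono[OF ce]) simp
  hence "1/(cosh u)^2 \<le> 1/(exp u/2)^2" by (simp add: frac_le)
  also have "\<dots> = 4 * exp (-2*u)" by (simp add: power2_eq_square exp_minus field_simps mult_exp_exp[symmetric] flip: exp_add)
  also have "\<dots> \<le> 4 * exp (-2*t)" using th_le_u[OF u(1)] u by simp
  finally show "Lf t \<le> 4 * exp (-2 * t)" using Lv by simp
  define x where "x = 4*u^2"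
  have x: "0 < x" using u by (simp add: x_def)
  have "2*u + (2*u)^3/6 \<le> sinh (2*u)" by (rule sinh_ge_cubic) (use u in simp)
  hence "2*u + (2*u)^3/6 \<le> 2 * sinh u * cosh u" unfolding sinh_double .
  hence s2: "2*u*(6+x)/6 \<le> 2 * sinh u * cosh u" by (simp add: x_def field_simps power2_eq_square power3_eq_cube)
  have "(t+1) * Lf t = u / (sinh u * cosh u)"
    unfolding Lv tv using sp by (simp add: field_simps power2_eq_square)
  also have "\<dots> \<le> 6 / (6 + x)"
  proof -
    have "u * (6 + x) \<le> 6 * (sinh u * cosh u)" using s2 by (simp add: field_simps)
    then show ?thesis using sp x by (simp add: field_simps)
  qed
  finally have A: "x / (6 + x) \<le> 1 - (t+1) * Lf t" using x by (simp add: field_simps)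
  have tx: "t \<le> x / 12" using th_le_sq[OF u(1)] u by (simp add: x_def)
  show "min t (1/2) \<le> 1 - (t+1) * Lf t"
  proof (cases "x \<le> 6")
    case True
    have "t \<le> x / 12" by (rule tx)
    also have "\<dots> \<le> x / (6 + x)" using True x by (simp add: field_simps)
    finally show ?thesis using A by simp
  next
    case False
    have "1/2 \<le> x / (6 + x)" using False by (simp add: field_simps)
    then have "1/2 \<le> 1 - (t+1) * Lf t" using A by linarith
    then show ?thesis by (simp add: min_le_iff_disj)
  qed
qed

lemma exp_pow_bound: "0 \<le> t \<Longrightarrow> 0 < k \<Longrightarrow> t^k \<le> (2 * real k)^k * exp (t/2)"
proof -
  assume t: "0 \<le> t" and k: "0 < k"
  have "t / (2 * real k) \<le> exp (t / (2 * real k))" using exp_ge_add_one_self[of "t / (2 * real k)"] by linarith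
  hence "(t / (2 * real k))^k \<le> exp (t / (2 * real k))^k" by (rule power_mono) (use t in simp)
  also have "\<dots> = exp (t/2)" using k by (simp add: exp_of_nat_mult[symmetric])
  finally show ?thesis using k by (simp add: power_divide field_simps)
qed

lemma F3_bound:
  fixes t L A :: real
  assumes t: "0 < t" and L: "0 < L" "L < 1" and A: "A = 1 - (t+1)*L" "0 < A" "min t (1/2) \<le> A"
    and a: "1 - L \<le> 3*t" and e: "L \<le> 4 * exp (-2*t)"
  shows "\<bar>2 * L * (2 - 3 * L + (t+1) * L^2) / A^3\<bar> \<le> 100000 / t^2 * exp (-3*t/2)"
proof -
  define N where "N = 2 - 3 * L + (t+1) * L^2"
  have Nq: "N = (1-L)*(2-L) + t*L^2" by (simp add: N_def algebra_simps power2_eq_square)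
  have N0: "0 \<le> N" unfolding Nq using L t by simp
  have X0: "0 \<le> 2 * L * N / A^3" using N0 L A by simp
  have L2: "L^2 \<le> 1" using L by (simp add: abs_square_le_1)
  show ?thesis
  proof (cases "t < 1/2")
    case True
    hence At: "t \<le> A" using A by simp
    have "(1-L)*(2-L) \<le> (3*t)*2" by (rule mult_mono) (use a L t in auto)
    moreover have "t*L^2 \<le> t*1" using L2 t by (intro mult_left_mono) auto
    ultimately have N7: "N \<le> 7*t" unfolding Nq by simp
    have "2 * L * N \<le> 2 * 1 * (7*t)" by (intro mult_mono) (use L N0 N7 in auto)
    moreover have "t^3 \<le> A^3" by (rule power_mono) (use At t in auto)
    ultimately have "2 * L * N / A^3 \<le> 2 * 1 * (7*t) / t^3"
      by (intro frac_le) (use t in auto)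
    also have "\<dots> = 14 / t^2" using t by (simp add: field_simps power2_eq_square power3_eq_cube)
    also have "\<dots> \<le> 100000 / t^2 * exp (-3*t/2)"
    proof -
      have "1 - 3*t/2 \<le> exp (-3*t/2)" using exp_ge_add_one_self[of "-3*t/2"] by simp
      hence "1/4 \<le> exp (-3*t/2)" using True by simp
      hence "14 \<le> 100000 * exp (-3*t/2)" by simp
      then show ?thesis using t by (simp add: field_simps)
    qed
    finally show ?thesis using X0 N_def by simp
  next
    case False
    hence A2: "1/2 \<le> A" and t2: "1/2 \<le> t" using A by auto
    have "N \<le> 2 + (t+1)" unfolding N_def using L L2 t by (smt (verit) mult_left_le)
    hence N3: "N \<le> 7 * t" using t2 by simp
    have "2 * L * N \<le> 2 * (4 * exp (-2*t)) * (7 * t)" by (intro mult_mono) (use L N0 N3 e in auto)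
    moreover have "(1/2)^3 \<le> A^3" by (rule power_mono) (use A2 in auto)
    ultimately have "2 * L * N / A^3 \<le> 2 * (4 * exp (-2*t)) * (7 * t) / (1/2)^3"
      by (intro frac_le) (use t in auto)
    also have "\<dots> = 448 * t^3 * exp (-2*t) / t^2" using t by (simp add: field_simps power2_eq_square power3_eq_cube)
    also have "\<dots> \<le> 448 * (216 * exp (t/2)) * exp (-2*t) / t^2"
      using exp_pow_bound[of t 3] t by (intro divide_right_mono mult_right_mono mult_left_mono) auto
    also have "\<dots> = 96768 / t^2 * (exp (t/2) * exp (-2*t))" by simp
    also have "exp (t/2) * exp (-2*t) = exp (-3*t/2)" by (simp flip: exp_add)
    also have "96768 / t^2 * exp (-3*t/2) \<le> 100000 / t^2 * exp (-3*t/2)"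
      by (intro mult_right_mono divide_right_mono) auto
    finally show ?thesis using X0 N_def by simp
  qed
qed

lemma mm: "(a::real) \<le> a' \<Longrightarrow> b \<le> b' \<Longrightarrow> 0 \<le> a \<Longrightarrow> 0 \<le> b \<Longrightarrow> a * b \<le> a' * b'"
  by (rule mult_mono) auto

lemma J2_bound:
  fixes t L A P :: real
  assumes t: "0 < t" and L: "0 < L" "L < 1" and A: "A = 1 - (t+1)*L" "0 < A" "min t (1/2) \<le> A"
    and a: "1 - L \<le> 3*t" and e: "L \<le> 4 * exp (-2*t)" and P: "P = (t+1) * (2 - L) - 1"
  shows "\<bar>- L / (2 * A^4) * (-2 * (1-L) * P * A + (2-L) * A^2 + 2 * (t+1) * L * (1-L) * A - 2 * L * P^2)\<bar>
     \<le> 100000000 / t^2 * exp (-3*t/2)"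
proof -
  define X where "X = 2 * (1-L) * P * A"
  define Y where "Y = (2-L) * A^2"
  define Z where "Z = 2 * (t+1) * L * (1-L) * A"
  define W where "W = 2 * L * P^2"
  have Pq: "P = (1-L) + t*(2-L)" using P by (simp add: algebra_simps)
  have P0: "0 \<le> P" unfolding Pq using L t by simp
  have X0: "0 \<le> X" "0 \<le> Y" "0 \<le> Z" "0 \<le> W" unfolding X_def Y_def Z_def W_def using L A P0 t by auto
  have B: "\<bar>-2 * (1-L) * P * A + (2-L) * A^2 + 2 * (t+1) * L * (1-L) * A - 2 * L * P^2\<bar> \<le> X + Y + Z + W"
  proof -
    have Be: "-2 * (1-L) * P * A + (2-L) * A^2 + 2 * (t+1) * L * (1-L) * A - 2 * L * P^2 = -X + Y + Z - W"
      unfolding X_def Y_def Z_def W_def by (simp add: algebra_simps)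
    show ?thesis unfolding Be abs_le_iff using X0 by linarith
  qed
  have eq: "\<bar>- L / (2 * A^4) * (-2 * (1-L) * P * A + (2-L) * A^2 + 2 * (t+1) * L * (1-L) * A - 2 * L * P^2)\<bar>
      = L / (2 * A^4) * \<bar>-2 * (1-L) * P * A + (2-L) * A^2 + 2 * (t+1) * L * (1-L) * A - 2 * L * P^2\<bar>"
    using L A by (simp add: abs_mult)
  have Lc: "0 \<le> L / (2 * A^4)" using L A by simp
  show ?thesis
  proof (cases "t < 1/2")
    case True
    hence At: "t \<le> A" using A by simp
    have tL: "0 \<le> t * L" using t L by simp
    have "A = (1 - L) - t * L" using A(1) by (simp add: algebra_simps)
    hence A3: "A \<le> 3*t" using a tL by linarith
    have "t * (2 - L) \<le> t * 2" using t L by (intro mult_left_mono) auto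
    hence P5: "P \<le> 5*t" unfolding Pq using a by linarith
    have "X \<le> 2 * (3*t) * (5*t) * (3*t)" unfolding X_def
      by (intro mm mult_left_mono) (use a P5 A3 L P0 A t in auto)
    also have "\<dots> \<le> 45 * t^2" using True t by (simp add: power2_eq_square)
    finally have Xb: "X \<le> 45 * t^2" .
    have "Y \<le> 2 * (3*t)^2" unfolding Y_def by (intro mm power_mono) (use A3 L A in auto)
    hence Yb: "Y \<le> 18 * t^2" by (simp add: power2_eq_square)
    have "Z \<le> 2 * (3/2) * 1 * (3*t) * (3*t)" unfolding Z_def
      by (intro mm mult_left_mono) (use a A3 L A t True in auto)
    hence Zb: "Z \<le> 27 * t^2" by (simp add: power2_eq_square)
    have "W \<le> 2 * 1 * (5*t)^2" unfolding W_def by (intro mm power_mono) (use P5 P0 L in auto)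
    hence Wb: "W \<le> 50 * t^2" by (simp add: power2_eq_square)
    have Bb: "X + Y + Z + W \<le> 140 * t^2" using Xb Yb Zb Wb by simp
    have "L / (2 * A^4) \<le> 1 / (2 * t^4)"
      by (intro frac_le mult_left_mono power_mono) (use L At t in auto)
    hence "L / (2 * A^4) * (X + Y + Z + W) \<le> 1 / (2 * t^4) * (140 * t^2)"
      by (intro mm) (use Bb Lc X0 in auto)
    also have "\<dots> = 70 / t^2" using t by (simp add: field_simps power2_eq_square power4_eq_xxxx)
    also have "\<dots> \<le> 100000000 / t^2 * exp (-3*t/2)"
    proof -
      have "1 - 3*t/2 \<le> exp (-3*t/2)" using exp_ge_add_one_self[of "-3*t/2"] by simp
      hence "1/4 \<le> exp (-3*t/2)" using True by simp
      hence "70 \<le> 100000000 * exp (-3*t/2)" by simp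
      then show ?thesis using t by (simp add: field_simps)
    qed
    finally have "L / (2 * A^4) * (X + Y + Z + W) \<le> 100000000 / t^2 * exp (-3*t/2)" .
    moreover have "L / (2 * A^4) * \<bar>-2 * (1-L) * P * A + (2-L) * A^2 + 2 * (t+1) * L * (1-L) * A - 2 * L * P^2\<bar>
        \<le> L / (2 * A^4) * (X + Y + Z + W)" by (rule mult_left_mono[OF B Lc])
    ultimately show ?thesis unfolding eq by linarith
  next
    case False
    hence A2: "1/2 \<le> A" and t2: "1/2 \<le> t" using A by auto
    have "0 \<le> (t+1) * L" using t L by simp
    hence A1: "A \<le> 1" using A(1) by linarith
    have "t * (2 - L) \<le> t * 2" using t L by (intro mult_left_mono) auto
    hence P6: "P \<le> 6*t" unfolding Pq using L t2 by linarith
    have "X \<le> 2 * 1 * (6*t) * 1" unfolding X_def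
      by (intro mm mult_left_mono) (use P6 A1 L P0 A t in auto)
    hence Xb: "X \<le> 12 * t" by simp
    have "Y \<le> 2 * 1^2" unfolding Y_def by (intro mm power_mono) (use A1 L A in auto)
    hence Yb: "Y \<le> 2" by simp
    have "Z \<le> 2 * (3*t) * 1 * 1 * 1" unfolding Z_def
      by (intro mm mult_left_mono) (use A1 L A t t2 in auto)
    hence Zb: "Z \<le> 6 * t" by simp
    have "W \<le> 2 * 1 * (6*t)^2" unfolding W_def by (intro mm power_mono) (use P6 P0 L in auto)
    hence Wb: "W \<le> 72 * t^2" by (simp add: power2_eq_square)
    have "t * 1 \<le> t * (2 * t)" using t t2 by (intro mult_left_mono) auto
    moreover have "(1/2)^2 \<le> t^2" using t2 by (intro power_mono) auto
    ultimately have "t \<le> 2 * t^2" "1 \<le> 4 * t^2" by (auto simp: power2_eq_square)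
    hence Bb: "X + Y + Z + W \<le> 116 * t^2" using Xb Yb Zb Wb by simp
    have "L / (2 * A^4) \<le> (4 * exp (-2*t)) / (2 * (1/2)^4)"
      by (intro frac_le mult_left_mono power_mono) (use L e A2 in auto)
    hence "L / (2 * A^4) * (X + Y + Z + W) \<le> (4 * exp (-2*t)) / (2 * (1/2)^4) * (116 * t^2)"
      by (intro mm) (use Bb Lc X0 in auto)
    also have "\<dots> = 3712 * t^4 * exp (-2*t) / t^2" using t by (simp add: field_simps power2_eq_square power4_eq_xxxx)
    also have "\<dots> \<le> 3712 * (4096 * exp (t/2)) * exp (-2*t) / t^2"
      using exp_pow_bound[of t 4] t by (intro divide_right_mono mult_right_mono mult_left_mono) auto
    also have "\<dots> = 15204352 / t^2 * (exp (t/2) * exp (-2*t))" by simp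
    also have "exp (t/2) * exp (-2*t) = exp (-3*t/2)" by (simp flip: exp_add)
    also have "15204352 / t^2 * exp (-3*t/2) \<le> 100000000 / t^2 * exp (-3*t/2)"
      by (intro mult_right_mono divide_right_mono) auto
    finally have "L / (2 * A^4) * (X + Y + Z + W) \<le> 100000000 / t^2 * exp (-3*t/2)" .
    moreover have "L / (2 * A^4) * \<bar>-2 * (1-L) * P * A + (2-L) * A^2 + 2 * (t+1) * L * (1-L) * A - 2 * L * P^2\<bar>
        \<le> L / (2 * A^4) * (X + Y + Z + W)" by (rule mult_left_mono[OF B Lc])
    ultimately show ?thesis unfolding eq by linarith
  qed
qed

lemma F3_bd: "0 < t \<Longrightarrow> \<bar>F3 t\<bar> \<le> 100000000 / t^2 * exp (-3*t/2)"
proof -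
  assume t: "0 < t"
  note b = Lf_bounds[OF t] and f = Lf_facts[OF t]
  have "\<bar>F3 t\<bar> \<le> 100000 / t^2 * exp (-3*t/2)"
    unfolding F3_def by (rule F3_bound[OF t _ _ refl]) (use b f in auto)
  also have "\<dots> \<le> 100000000 / t^2 * exp (-3*t/2)"
    by (intro mult_right_mono divide_right_mono) auto
  finally show ?thesis .
qed

lemma J2_bd: "0 < t \<Longrightarrow> \<bar>J2 t\<bar> \<le> 100000000 / t^2 * exp (-3*t/2)"
proof -
  assume t: "0 < t"
  note b = Lf_bounds[OF t] and f = Lf_facts[OF t]
  show ?thesis
    unfolding J2_def Let_def by (rule J2_bound[OF t _ _ refl _ _ _ _ refl]) (use b f in auto)
qed

lemma taylor_bound:
  fixes g :: "nat \<Rightarrow> real \<Rightarrow> real" and n :: nat and K \<theta> \<delta> :: real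
  assumes n: "0 < n"
    and D: "\<And>m t. m < n \<Longrightarrow> 0 < t \<Longrightarrow> (g m has_real_derivative g (Suc m) t) (at t)"
    and B: "\<And>t. 0 < t \<Longrightarrow> \<bar>g n t\<bar> \<le> K / t^2 * exp (-3*t/2)"
    and th: "0 < \<theta>" and d: "\<bar>\<delta>\<bar> \<le> \<theta>/3" "\<delta> \<noteq> 0" and K: "0 \<le> K"
  shows "\<bar>g 0 (\<theta>+\<delta>) - (\<Sum>m<n. g m \<theta> / fact m * \<delta>^m)\<bar> \<le> K * (9/4) / \<theta>^2 * exp (-\<theta>) * \<bar>\<delta>\<bar>^n / fact n"
proof -
  have "\<exists>t. (if \<theta>+\<delta> < \<theta> then \<theta>+\<delta> < t \<and> t < \<theta> else \<theta> < t \<and> t < \<theta>+\<delta>) \<and>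
    g 0 (\<theta>+\<delta>) = (\<Sum>m<n. (g m \<theta> / fact m) * (\<theta>+\<delta> - \<theta>)^m) + (g n t / fact n) * (\<theta>+\<delta> - \<theta>)^n"
    apply (rule Taylor[where a="2*\<theta>/3" and b="4*\<theta>/3" and diff=g and f="g 0"])
    using n d th by (auto intro!: D simp: abs_le_iff)
  then obtain \<xi> where xi: "if \<theta>+\<delta> < \<theta> then \<theta>+\<delta> < \<xi> \<and> \<xi> < \<theta> else \<theta> < \<xi> \<and> \<xi> < \<theta>+\<delta>"
    and eq: "g 0 (\<theta>+\<delta>) = (\<Sum>m<n. (g m \<theta> / fact m) * \<delta>^m) + (g n \<xi> / fact n) * \<delta>^n"
    by auto
  have xr: "2*\<theta>/3 \<le> \<xi>" using xi d by (auto simp: abs_le_iff split: if_splits)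
  have xp: "0 < \<xi>" using xr th by simp
  have "\<bar>g 0 (\<theta>+\<delta>) - (\<Sum>m<n. g m \<theta> / fact m * \<delta>^m)\<bar> = \<bar>g n \<xi>\<bar> * \<bar>\<delta>\<bar>^n / fact n"
    unfolding eq by (simp add: abs_mult power_abs)
  also have "\<dots> \<le> (K / \<xi>^2 * exp (-3*\<xi>/2)) * \<bar>\<delta>\<bar>^n / fact n"
    by (intro divide_right_mono mult_right_mono B xp) auto
  also have "K / \<xi>^2 \<le> K * (9/4) / \<theta>^2"
  proof -
    have "(2*\<theta>/3)^2 \<le> \<xi>^2" by (rule power_mono[OF xr]) (use th in simp)
    hence "K / \<xi>^2 \<le> K / (2*\<theta>/3)^2" using K th xp by (intro divide_left_mono) auto
    also have "\<dots> = K * (9/4) / \<theta>^2" by (simp add: power2_eq_square field_simps)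
    finally show ?thesis .
  qed
  hence "(K / \<xi>^2 * exp (-3*\<xi>/2)) * \<bar>\<delta>\<bar>^n / fact n \<le> (K * (9/4) / \<theta>^2 * exp (-\<theta>)) * \<bar>\<delta>\<bar>^n / fact n"
    using xr K by (intro divide_right_mono mult_right_mono mult_mono) auto
  finally show ?thesis .
qed

theorem lemma3:
  shows "\<exists>C>0. \<forall>\<theta>>0. \<forall>\<delta>::real. \<bar>\<delta>\<bar> \<le> \<theta>/3 \<longrightarrow>
     \<bar>fF (\<theta>+\<delta>) - fF \<theta> - \<delta> * deriv fF \<theta> - \<delta>^2/2 * deriv (deriv fF) \<theta>\<bar>
        \<le> C * \<theta> powr (-2) * \<bar>\<delta>\<bar>^3 * exp (-\<theta>) \<and>
     \<bar>jJ (\<theta>+\<delta>) - jJ \<theta> - \<delta> * deriv jJ \<theta>\<bar>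
        \<le> C * \<theta> powr (-2) * \<delta>^2 * exp (-\<theta>)"
proof (intro exI[of _ "1000000000"] conjI allI impI)
  fix \<theta> \<delta> :: real
  assume th: "0 < \<theta>" and d: "\<bar>\<delta>\<bar> \<le> \<theta>/3"
  have d1: "deriv fF \<theta> = F1 \<theta>" by (rule DERIV_imp_deriv[OF fF_deriv[OF th]])
  have "(deriv fF has_real_derivative F2 \<theta>) (at \<theta>)"
    by (rule has_field_derivative_transform_within_open[OF F1_deriv[OF th], where S="{0<..}"])
       (auto intro!: DERIV_imp_deriv[symmetric] fF_deriv simp: th)
  hence d2: "deriv (deriv fF) \<theta> = F2 \<theta>" by (rule DERIV_imp_deriv)
  have dj: "deriv jJ \<theta> = J1 \<theta>" by (rule DERIV_imp_deriv[OF jJ_deriv[OF th]])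
  have pw: "\<theta> powr (-2) = 1 / \<theta>^2" using th by (simp add: powr_minus powr_numeral divide_inverse)
  have e0: "0 \<le> 1000000000 * \<theta> powr (-2) * \<bar>\<delta>\<bar>^3 * exp (-\<theta>)" "0 \<le> 1000000000 * \<theta> powr (-2) * \<delta>^2 * exp (-\<theta>)"
    by auto
  show "\<bar>fF (\<theta>+\<delta>) - fF \<theta> - \<delta> * deriv fF \<theta> - \<delta>^2/2 * deriv (deriv fF) \<theta>\<bar>
        \<le> 1000000000 * \<theta> powr (-2) * \<bar>\<delta>\<bar>^3 * exp (-\<theta>)"
  proof (cases "\<delta> = 0")
    case True then show ?thesis using e0 by simp
  next
    case False
    define g :: "nat \<Rightarrow> real \<Rightarrow> real" where
      "g m = (if m = 0 then fF else if m = 1 then F1 else if m = 2 then F2 else F3)" for m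
    have D: "(g m has_real_derivative g (Suc m) t) (at t)" if "m < 3" "0 < t" for m t
    proof -
      have "m = 0 \<or> m = 1 \<or> m = 2" using that by auto
      then show ?thesis using that by (auto simp: g_def intro: fF_deriv F1_deriv F2_deriv)
    qed
    have B: "\<bar>g 3 t\<bar> \<le> 100000000 / t^2 * exp (-3*t/2)" if "0 < t" for t
      using F3_bd[OF that] by (simp add: g_def)
    have T: "\<bar>g 0 (\<theta>+\<delta>) - (\<Sum>m<3. g m \<theta> / fact m * \<delta>^m)\<bar>
        \<le> 100000000 * (9/4) / \<theta>^2 * exp (-\<theta>) * \<bar>\<delta>\<bar>^3 / fact 3"
      by (rule taylor_bound[OF _ D B th d False]) auto
    have S: "(\<Sum>m<3. g m \<theta> / fact m * \<delta>^m) = fF \<theta> + \<delta> * F1 \<theta> + \<delta>^2/2 * F2 \<theta>"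
      by (simp add: eval_nat_numeral g_def fact_numeral)
    have "\<bar>fF (\<theta>+\<delta>) - fF \<theta> - \<delta> * deriv fF \<theta> - \<delta>^2/2 * deriv (deriv fF) \<theta>\<bar>
        = \<bar>g 0 (\<theta>+\<delta>) - (\<Sum>m<3. g m \<theta> / fact m * \<delta>^m)\<bar>"
      unfolding S d1 d2 by (simp add: g_def algebra_simps)
    also have "\<dots> \<le> 100000000 * (9/4) / \<theta>^2 * exp (-\<theta>) * \<bar>\<delta>\<bar>^3 / fact 3" by (rule T)
    also have "\<dots> = 37500000 * (\<bar>\<delta>\<bar>^3 * exp (-\<theta>) / \<theta>^2)" by (simp add: fact_numeral field_simps)
    also have "\<dots> \<le> 1000000000 * (\<bar>\<delta>\<bar>^3 * exp (-\<theta>) / \<theta>^2)" by (rule mult_right_mono) auto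
    also have "\<dots> = 1000000000 * \<theta> powr (-2) * \<bar>\<delta>\<bar>^3 * exp (-\<theta>)"
      unfolding pw by simp
    finally show ?thesis .
  qed
  show "\<bar>jJ (\<theta>+\<delta>) - jJ \<theta> - \<delta> * deriv jJ \<theta>\<bar> \<le> 1000000000 * \<theta> powr (-2) * \<delta>^2 * exp (-\<theta>)"
  proof (cases "\<delta> = 0")
    case True then show ?thesis using e0 by simp
  next
    case False
    define g :: "nat \<Rightarrow> real \<Rightarrow> real" where
      "g m = (if m = 0 then jJ else if m = 1 then J1 else J2)" for m
    have D: "(g m has_real_derivative g (Suc m) t) (at t)" if "m < 2" "0 < t" for m t
    proof -
      have "m = 0 \<or> m = 1" using that by auto
      then show ?thesis using that by (auto simp: g_def intro: jJ_deriv J1_deriv)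
    qed
    have B: "\<bar>g 2 t\<bar> \<le> 100000000 / t^2 * exp (-3*t/2)" if "0 < t" for t
      using J2_bd[OF that] by (simp add: g_def)
    have T: "\<bar>g 0 (\<theta>+\<delta>) - (\<Sum>m<2. g m \<theta> / fact m * \<delta>^m)\<bar>
        \<le> 100000000 * (9/4) / \<theta>^2 * exp (-\<theta>) * \<bar>\<delta>\<bar>^2 / fact 2"
      by (rule taylor_bound[OF _ D B th d False]) auto
    have S: "(\<Sum>m<2. g m \<theta> / fact m * \<delta>^m) = jJ \<theta> + \<delta> * J1 \<theta>"
      by (simp add: eval_nat_numeral g_def)
    have "\<bar>jJ (\<theta>+\<delta>) - jJ \<theta> - \<delta> * deriv jJ \<theta>\<bar>
        = \<bar>g 0 (\<theta>+\<delta>) - (\<Sum>m<2. g m \<theta> / fact m * \<delta>^m)\<bar>"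
      unfolding S dj by (simp add: g_def algebra_simps)
    also have "\<dots> \<le> 100000000 * (9/4) / \<theta>^2 * exp (-\<theta>) * \<bar>\<delta>\<bar>^2 / fact 2" by (rule T)
    also have "\<dots> = 112500000 * (\<delta>^2 * exp (-\<theta>) / \<theta>^2)" by (simp add: field_simps)
    also have "\<dots> \<le> 1000000000 * (\<delta>^2 * exp (-\<theta>) / \<theta>^2)" by (rule mult_right_mono) auto
    also have "\<dots> = 1000000000 * \<theta> powr (-2) * \<delta>^2 * exp (-\<theta>)"
      unfolding pw by simp
    finally show ?thesis .
  qed
qed simp

end
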